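(* Let ${\rm H}>0$ and ${\rm K}>0$. If there exists a centered Gaussian process $(B(t))_{t\ge 0}$ with covariance \[ \mathbb{E}\,B(s)B(t)=2^{-{\rm K}}\Bigl(\bigl(s^{2{\rm H}}+t^{2{\rm H}}\bigr)^{{\rm K}}-|t-s|^{2{\rm H}{\rm K}}\Bigr),\qquad s,t\ge 0, \] (i.e. bifractional Brownian motion with parameters $({\rm H},{\rm K})$ exists on $\mathbb{R}_+$), then ${\rm K}\le 2$ and ${\rm H}{\rm K}\le 1$. *)

theory Defs
  imports "HOL-Probability.Probability"
begin

definition centered_gaussian_rv :: "'a measure \<Rightarrow> ('a \<Rightarrow> real) \<Rightarrow> bool" where
  "centered_gaussian_rv M X \<longleftrightarrow>
     X \<in> borel_measurable M \<and>
     ((AE \<omega> in M. X \<omega> = 0) \<or> (\<exists>\<sigma>>0. distributed M lborel X (normal_density 0 \<sigma>)))"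

definition centered_gaussian_process ::
    "'a measure \<Rightarrow> (real \<Rightarrow> 'a \<Rightarrow> real) \<Rightarrow> bool" where
  "centered_gaussian_process M B \<longleftrightarrow>
     prob_space M \<and>
     (\<forall>t\<ge>0. B t \<in> borel_measurable M) \<and>
     (\<forall>I c. finite I \<and> I \<subseteq> {0..} \<longrightarrow>
        centered_gaussian_rv M (\<lambda>\<omega>. \<Sum>t\<in>I. c t * B t \<omega>))"

definition bifBm_cov :: "real \<Rightarrow> real \<Rightarrow> real \<Rightarrow> real \<Rightarrow> real" where
  "bifBm_cov H K s t =
     2 powr (- K) * ((s powr (2*H) + t powr (2*H)) powr K - \<bar>t - s\<bar> powr (2*H*K))"

end

theory Submission
  imports Defs
begin

lemma bern: fixes z p :: real assumes "z \<ge> 0" "p \<ge> 1" shows "1 + p * z \<le> (1 + z) powr p"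
proof -
  let ?g = "\<lambda>z. (1 + z) powr p - 1 - p * z"
  have d: "\<And>y. y \<ge> 0 \<Longrightarrow> (?g has_real_derivative (p * (1+y) powr (p-1) - p)) (at y)"
    by (auto intro!: derivative_eq_intros)
  have "?g 0 \<le> ?g z"
  proof (rule DERIV_nonneg_imp_nondecreasing[OF assms(1)])
    fix y assume "0 \<le> y" "y \<le> z"
    show "\<exists>d. (?g has_real_derivative d) (at y) \<and> 0 \<le> d"
      apply (rule exI[of _ "p * (1+y) powr (p-1) - p"])
      using d[OF \<open>0\<le>y\<close>] \<open>0\<le>y\<close> assms
      by (simp add: ge_one_powr_ge_zero)
  qed
  then show ?thesis by simp
qed

lemma bern2: fixes a p :: real assumes "a > 0" "p \<ge> 1" "b \<ge> 0"
  shows "a powr p + p * b * a powr (p - 1) \<le> (a + b) powr p"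
proof -
  have "(a + b) powr p = a powr p * (1 + b/a) powr p"
  proof -
    have "a + b = a * (1 + b/a)" using assms by (simp add: field_simps)
    thus ?thesis using assms by (simp add: powr_mult)
  qed
  also have "\<dots> \<ge> a powr p * (1 + p * (b/a))"
    using bern[of "b/a" p] assms by (intro mult_left_mono) auto
  finally show ?thesis using assms
    by (simp add: powr_diff field_simps)
qed

lemma analytic:
  fixes H K :: real
  assumes H: "H > 0" and K: "K > 0"
    and hyp: "\<And>x. x \<ge> 1 \<Longrightarrow>
      2 powr (-K) * ((1 + x powr (2*H)) powr K - (x-1) powr (2*H*K)) \<le> x powr (H*K)"
  shows "K \<le> 2 \<and> H * K \<le> 1"
proof
  show "K \<le> 2"
  proof (rule ccontr)
    assume "\<not> K \<le> 2" hence K2: "K > 2" by simp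
    define C where "C = 2 powr K / K"
    define x where "x = (C + 1) powr (1 / (H * (K - 2)))"
    have Cpos: "C > 0" using K by (simp add: C_def)
    have x1: "x \<ge> 1" unfolding x_def using Cpos H K2 by (simp add: ge_one_powr_ge_zero)
    have xe: "x powr (H*K - 2*H) = C + 1"
      unfolding x_def using Cpos H K2 by (simp add: powr_powr algebra_simps)
    define a where "a = x powr (2*H)"
    have a1: "a \<ge> 1" unfolding a_def using x1 H by (simp add: ge_one_powr_ge_zero)
    have "a powr K + K * 1 * a powr (K - 1) \<le> (a + 1) powr K"
      using bern2[of a K 1] a1 K2 by simp
    moreover have "(x-1) powr (2*H*K) \<le> a powr K"
      unfolding a_def using x1 H K by (simp add: powr_powr powr_mono2)
    ultimately have "K * a powr (K-1) \<le> (1 + x powr (2*H)) powr K - (x-1) powr (2*H*K)"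
      by (simp add: a_def add.commute)
    hence "2 powr (-K) * (K * a powr (K-1)) \<le> x powr (H*K)"
      using hyp[OF x1] by (smt (verit) mult_left_mono powr_ge_zero)
    moreover have "a powr (K-1) = x powr (H*K) * x powr (H*K - 2*H)"
      unfolding a_def using x1 by (simp add: powr_powr powr_add[symmetric] algebra_simps)
    ultimately have "2 powr (-K) * K * (x powr (H*K - 2*H)) * x powr (H*K) \<le> x powr (H*K)"
      by (simp add: mult_ac)
    hence "2 powr (-K) * K * (C+1) * x powr (H*K) \<le> x powr (H*K)"
      unfolding xe .
    moreover have "2 powr (-K) * K * (C+1) > 1"
      using K by (simp add: C_def powr_minus field_simps)
    moreover have "x powr (H*K) > 0" using x1 by simp
    ultimately show False
      by (metis linorder_not_le mult_strict_right_mono mult_1 mult.assoc)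
  qed
next
  show "H * K \<le> 1"
  proof (rule ccontr)
    assume "\<not> H * K \<le> 1" hence HK: "H * K > 1" by simp
    define p where "p = 2*H*K"
    define C where "C = 2 powr K * 2 powr (p - 1) / p"
    define x where "x = max 2 ((C + 1) powr (1 / (H * K - 1)))"
    have p1: "p > 1" using HK by (simp add: p_def)
    have Cpos: "C > 0" using p1 by (simp add: C_def)
    have x2: "x \<ge> 2" unfolding x_def by simp
    have xe: "x powr (H*K - 1) \<ge> C + 1"
    proof -
      have "C + 1 = ((C + 1) powr (1 / (H * K - 1))) powr (H*K - 1)"
        using Cpos HK by (simp add: powr_powr)
      also have "\<dots> \<le> x powr (H*K - 1)"
        unfolding x_def using HK by (intro powr_mono2) auto
      finally show ?thesis .
    qed
    have "(x-1) powr p + p * 1 * (x-1) powr (p - 1) \<le> ((x-1) + 1) powr p"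
      using bern2[of "x-1" p 1] x2 p1 by simp
    moreover have "x powr p \<le> (1 + x powr (2*H)) powr K"
    proof -
      have "x powr p = (x powr (2*H)) powr K" using x2 by (simp add: powr_powr p_def)
      also have "\<dots> \<le> (1 + x powr (2*H)) powr K" using K by (intro powr_mono2) auto
      finally show ?thesis .
    qed
    ultimately have "p * (x-1) powr (p-1) \<le> (1 + x powr (2*H)) powr K - (x-1) powr (2*H*K)"
      by (simp add: p_def)
    moreover have "(x/2) powr (p-1) \<le> (x-1) powr (p-1)"
      using x2 p1 by (intro powr_mono2) auto
    ultimately have "p * (x/2) powr (p-1) \<le> (1 + x powr (2*H)) powr K - (x-1) powr (2*H*K)"
      using p1 by (smt (verit) mult_left_mono)
    hence "2 powr (-K) * (p * (x/2) powr (p-1)) \<le> x powr (H*K)"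
      using hyp[of x] x2 by (smt (verit) mult_left_mono powr_ge_zero)
    moreover have "(x/2) powr (p-1) = x powr (H*K) * x powr (H*K - 1) / 2 powr (p-1)"
      using x2 by (simp add: powr_divide powr_add[symmetric] p_def algebra_simps)
    ultimately have "2 powr (-K) * p / 2 powr (p-1) * x powr (H*K - 1) * x powr (H*K) \<le> x powr (H*K)"
      by (simp add: mult_ac)
    moreover have "2 powr (-K) * p / 2 powr (p-1) * x powr (H*K - 1) > 1"
    proof -
      have "2 powr (-K) * p / 2 powr (p-1) * x powr (H*K - 1) \<ge> 2 powr (-K) * p / 2 powr (p-1) * (C + 1)"
        using xe p1 by (intro mult_left_mono) auto
      moreover have "2 powr (-K) * p / 2 powr (p-1) * (C + 1) > 1"
        using p1 by (simp add: C_def powr_minus field_simps)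
      ultimately show ?thesis by linarith
    qed
    moreover have "x powr (H*K) > 0" using x2 by simp
    ultimately show False
      by (metis linorder_not_le mult_strict_right_mono mult_1 mult.assoc)
  qed
qed

lemma cs:
  fixes M :: "'a measure" and f g :: "'a \<Rightarrow> real"
  assumes "integrable M (\<lambda>w. f w * f w)" "integrable M (\<lambda>w. f w * g w)" "integrable M (\<lambda>w. g w * g w)"
  shows "0 \<le> a^2 * (\<integral>w. f w * f w \<partial>M) - 2 * a * (\<integral>w. f w * g w \<partial>M) + (\<integral>w. g w * g w \<partial>M)"
proof -
  have "0 \<le> (\<integral>w. (a * f w - g w)^2 \<partial>M)" by simp
  also have "(\<lambda>w. (a * f w - g w)^2) = (\<lambda>w. a^2 * (f w * f w) - 2 * a * (f w * g w) + g w * g w)"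
    by (auto simp: power2_eq_square algebra_simps)
  also have "(\<integral>w. a^2 * (f w * f w) - 2 * a * (f w * g w) + g w * g w \<partial>M)
     = a^2 * (\<integral>w. f w * f w \<partial>M) - 2 * a * (\<integral>w. f w * g w \<partial>M) + (\<integral>w. g w * g w \<partial>M)"
    using assms by (simp add: integral_add integral_diff)
  finally show ?thesis .
qed

lemma main:
  fixes H K :: real and M :: "'a measure" and B :: "real \<Rightarrow> 'a \<Rightarrow> real"
  assumes H: "H > 0" and K: "K > 0"
    and cov: "\<And>s t. s \<ge> 0 \<Longrightarrow> t \<ge> 0 \<Longrightarrow>
           integrable M (\<lambda>\<omega>. B s \<omega> * B t \<omega>) \<and>
           (\<integral>\<omega>. B s \<omega> * B t \<omega> \<partial>M) = bifBm_cov H K s t"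
  shows "K \<le> 2 \<and> H * K \<le> 1"
proof (rule analytic[OF H K])
  fix x :: real assume x1: "x \<ge> 1"
  define a where "a = x powr (H*K)"
  have apos: "a > 0" using x1 by (simp add: a_def)
  have c11: "bifBm_cov H K 1 1 = 1"
    using K H by (simp add: bifBm_cov_def powr_minus field_simps)
  have cxx: "bifBm_cov H K x x = a^2"
  proof -
    have "(x powr (2*H) + x powr (2*H)) powr K = 2 powr K * x powr (2*H*K)"
      using x1 by (simp add: powr_mult powr_powr)
    moreover have "a^2 = x powr (2*H*K)" using x1
      by (simp add: a_def power2_eq_square powr_add[symmetric] algebra_simps)
    ultimately show ?thesis using H K by (simp add: bifBm_cov_def powr_minus field_simps)
  qed
  have c1x: "bifBm_cov H K 1 x = 2 powr (-K) * ((1 + x powr (2*H)) powr K - (x-1) powr (2*H*K))"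
    using x1 by (simp add: bifBm_cov_def)
  have "0 \<le> a^2 * bifBm_cov H K 1 1 - 2 * a * bifBm_cov H K 1 x + bifBm_cov H K x x"
    using cs[of M "B 1" "B x" a] cov[of 1 1] cov[of 1 x] cov[of x x] x1 by simp
  hence "2 * a * bifBm_cov H K 1 x \<le> 2 * a * a"
    by (simp add: c11 cxx power2_eq_square)
  hence "bifBm_cov H K 1 x \<le> a" using apos by simp
  thus "2 powr (-K) * ((1 + x powr (2*H)) powr K - (x-1) powr (2*H*K)) \<le> x powr (H*K)"
    by (simp add: c1x a_def)
qed

theorem proposition3p1:
  fixes H K :: real and M :: "'a measure" and B :: "real \<Rightarrow> 'a \<Rightarrow> real"
  assumes "H > 0" and "K > 0"
    and "centered_gaussian_process M B"
    and "\<And>s t. s \<ge> 0 \<Longrightarrow> t \<ge> 0 \<Longrightarrow>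
           integrable M (\<lambda>\<omega>. B s \<omega> * B t \<omega>) \<and>
           (\<integral>\<omega>. B s \<omega> * B t \<omega> \<partial>M) = bifBm_cov H K s t"
  shows "K \<le> 2 \<and> H * K \<le> 1"
  using main[OF assms(1,2,4)] .

end
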